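(* Let $p$ be a prime and let $k\in\mathbb{Q}_p$ with $|k|_p>1$. For a vertex $v$ of the branch $T_{\mathbb{Z}_p}$ (described in the context) at depth $\ell$, define $$\phi(v)=\frac{p}{p+1}\int_{\mathbb{Z}_p} d\mu(x)\, e^{2\pi i\{kx\}}\, p^{-d_C(x,v)},$$ where $d\mu$ is the Haar measure on $\mathbb{Q}_p$ normalized by $\mu(\mathbb{Z}_p)=1$. If $0\le \ell< -\operatorname{ord}_p(k)-2$, then $\phi(v)=0$.
   Context: For $x\in\mathbb{Q}_p$, $\operatorname{ord}_p(x)$ is the $p$-adic valuation and $|x|_p=p^{-\operatorname{ord}_p(x)}$. The fractional part $\{\cdot\}:\mathbb{Q}_p\to\mathbb{Q}$ is defined by $\{\sum_{j=m}^\infty a_jp^j\}=\sum_{j=m}^{-1}a_jp^j$ (digits $a_j\in\{0,\dots,p-1\}$), interpreted as a rational number and equal to $0$ if $m\ge 0$. The Bruhat--Tits tree $T_p$ of $\mathbb{Q}_p$ is the $(p+1)$-regular tree whose space of ends is $\mathbb{P}^1(\mathbb{Q}_p)$. Fix the centerpoint $C$ to be the vertex below which the boundary ends form $\mathbb{Z}_p$. The branch $T_{\mathbb{Z}_p}$ below $C$ is described as follows: its vertices at depth $n\ge 0$ (distance $n$ from $C$) are the balls $a+p^n\mathbb{Z}_p$ with $a\in\mathbb{Z}_p$ (so $C=\mathbb{Z}_p$ is at depth $0$), each depth-$n$ ball being joined by an edge to the $p$ balls of radius $p^{-n-1}$ it contains; a boundary point $x\in\mathbb{Z}_p$ is the end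 given by the nested sequence of balls containing $x$. For $x\in\mathbb{Z}_p$ and a vertex $v$ at depth $\ell$ of this branch, let $j\le \ell$ be the largest depth such that $x$ lies in the ball of the ancestor of $v$ at depth $j$ (so $j=\ell$ iff $x\in v$). The regularized distance (the graph distance from $v$ to the end $x$, renormalized so that it vanishes at $v=C$) is $d_C(x,v)=(\ell-j)-j=\ell-2j$. *)

theory Defs
  imports "HOL-Probability.Probability"
begin

text \<open>Model of Z_p: a p-adic integer x = sum_i x_i p^i is its digit sequence
  x :: nat => nat (digits in {0..<p}).  The normalized Haar measure on Z_p
  is the infinite product of the uniform measures on the digits.\<close>

definition zp_trunc :: "nat \<Rightarrow> (nat \<Rightarrow> nat) \<Rightarrow> nat \<Rightarrow> nat" where
  "zp_trunc p x n = (\<Sum>i<n. x i * p ^ i)"   \<comment> \<open>x mod p^n as a natural number\<close>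

definition is_padic_digits :: "nat \<Rightarrow> (nat \<Rightarrow> nat) \<Rightarrow> bool" where
  "is_padic_digits p x \<longleftrightarrow> (\<forall>i. x i < p)"

definition haar_Zp :: "nat \<Rightarrow> (nat \<Rightarrow> nat) measure" where
  "haar_Zp p = PiM UNIV (\<lambda>_. measure_pmf (pmf_of_set {0..<p}))"

text \<open>For k = p^(-m) * u with u a p-adic unit (digits u) and m >= 1, so that
  ord_p k = -m: the fractional part {k x} of k x for x in Z_p.\<close>

definition frac_kx :: "nat \<Rightarrow> nat \<Rightarrow> (nat \<Rightarrow> nat) \<Rightarrow> (nat \<Rightarrow> nat) \<Rightarrow> real" where
  "frac_kx p m u x = real ((zp_trunc p u m * zp_trunc p x m) mod p ^ m) / real (p ^ m)"

text \<open>Vertex v at depth l of the branch below C: the ball a + p^l Z_p, with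
  representative a in {0..<p^l}.  anc_depth gives the largest j <= l such that x
  lies in the ancestor ball (a mod p^j) + p^j Z_p.\<close>

definition anc_depth :: "nat \<Rightarrow> nat \<Rightarrow> nat \<Rightarrow> (nat \<Rightarrow> nat) \<Rightarrow> nat" where
  "anc_depth p l a x = (GREATEST j. j \<le> l \<and> zp_trunc p x j = a mod p ^ j)"

definition dC :: "nat \<Rightarrow> nat \<Rightarrow> nat \<Rightarrow> (nat \<Rightarrow> nat) \<Rightarrow> int" where
  "dC p l a x = int l - 2 * int (anc_depth p l a x)"

definition phi :: "nat \<Rightarrow> nat \<Rightarrow> (nat \<Rightarrow> nat) \<Rightarrow> nat \<Rightarrow> nat \<Rightarrow> complex" where
  "phi p m u l a = complex_of_real (real p / real (p + 1)) *
     (\<integral>x. exp (2 * complex_of_real pi * \<i> * complex_of_real (frac_kx p m u x))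
           * complex_of_real (real p powr (- real_of_int (dC p l a x))) \<partial>haar_Zp p)"

end

theory Submission
  imports Defs
begin

lemma zp_trunc_upd: "j \<le> k \<Longrightarrow> zp_trunc p (X(k:=t)) j = zp_trunc p X j"
  unfolding zp_trunc_def by (intro sum.cong) auto

lemma anc_depth_upd: "l \<le> k \<Longrightarrow> anc_depth p l a (X(k:=t)) = anc_depth p l a X"
  unfolding anc_depth_def
  by (intro arg_cong[where f=Greatest] ext) (auto simp: zp_trunc_upd)

lemma zp_trunc_upd_Suc: "zp_trunc p (X(k:=t)) (Suc k) = zp_trunc p X k + t * p ^ k"
  using zp_trunc_upd[of k k p X t] unfolding zp_trunc_def by simp

lemma exp_nat: "exp (2 * complex_of_real pi * \<i> * of_nat n) = 1"
proof -
  have "exp (2 * complex_of_real pi * \<i> * of_nat n) = exp (of_nat n * (2 * of_real pi * \<i>))"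
    by (simp add: mult_ac)
  also have "\<dots> = 1" by (simp only: exp_of_nat_mult exp_two_pi_i) simp
  finally show ?thesis .
qed

lemma exp_mod:
  assumes "q > 0"
  shows "exp (2 * complex_of_real pi * \<i> * complex_of_real (real (N mod q) / real q))
       = exp (2 * complex_of_real pi * \<i> * complex_of_real (real N / real q))"
proof -
  have e: "real N = real (N div q) * real q + real (N mod q)"
    by (metis of_nat_add of_nat_mult div_mult_mod_eq)
  have "real N / real q = real (N div q) + real (N mod q) / real q"
    using assms by (subst e) (simp add: field_simps)
  then have "exp (2 * complex_of_real pi * \<i> * complex_of_real (real N / real q))
     = exp (2 * complex_of_real pi * \<i> * of_nat (N div q)) *
       exp (2 * complex_of_real pi * \<i> * complex_of_real (real (N mod q) / real q))"
    by (simp add: distrib_left exp_add[symmetric])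
  then show ?thesis by (simp add: exp_nat)
qed

lemma zp_trunc_mod:
  assumes "m \<ge> 1" "u 0 < p"
  shows "zp_trunc p u m mod p = u 0"
proof -
  obtain n where m: "m = Suc n" using assms by (cases m) auto
  have "zp_trunc p u m = u 0 + p * (\<Sum>i<n. u (Suc i) * p ^ i)"
    unfolding zp_trunc_def m sum.lessThan_Suc_shift
    by (simp add: sum_distrib_left mult_ac)
  then show ?thesis using assms by simp
qed

lemma root_sum:
  assumes "p \<ge> 2" "U mod p \<noteq> 0"
  shows "(\<Sum>t<p. exp (2 * complex_of_real pi * \<i> * complex_of_real (real U / real p)) ^ t) = 0"
proof -
  define w where "w = exp (2 * complex_of_real pi * \<i> * complex_of_real (real U / real p))"
  have wp: "w ^ p = 1"
  proof -
    have "w ^ p = exp (of_nat p * (2 * complex_of_real pi * \<i> * complex_of_real (real U / real p)))"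
      unfolding w_def by (simp only: exp_of_nat_mult)
    also have "of_nat p * (2 * complex_of_real pi * \<i> * complex_of_real (real U / real p))
       = 2 * complex_of_real pi * \<i> * of_nat U"
      using assms(1) by (simp add: field_simps)
    finally show ?thesis by (simp add: exp_nat)
  qed
  have w1: "w \<noteq> 1"
  proof
    assume "w = 1"
    then obtain n :: int where n: "2 * pi * (real U / real p) = of_int (2 * n) * pi"
      unfolding w_def exp_eq_1 by auto
    then have "real U = real p * of_int n" using assms(1) by (simp add: field_simps)
    then have "int U = int p * n" by (metis of_int_eq_iff of_int_mult of_int_of_nat_eq)
    then have "int p dvd int U" by simp
    then have "p dvd U" by presburger
    then show False using assms(2) by simp
  qed
  show ?thesis using geometric_sum[OF w1, of p] wp unfolding w_def[symmetric] by simp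
qed

lemma key_sum:
  assumes p2: "p \<ge> 2" and U: "zp_trunc p u m mod p \<noteq> 0" and lk: "l \<le> k" and m: "m = Suc k"
  shows "(\<Sum>t\<in>{0..<p}. exp (2 * complex_of_real pi * \<i> * complex_of_real (frac_kx p m u (X(k:=t))))
           * complex_of_real (real p powr (- real_of_int (dC p l a (X(k:=t)))))) = 0"
proof -
  define U where "U = zp_trunc p u m"
  define A where "A = zp_trunc p X k"
  define W where "W = complex_of_real (real p powr (- real_of_int (dC p l a X)))"
  define c where "c = exp (2 * complex_of_real pi * \<i> * complex_of_real (real (U * A) / real (p ^ m)))"
  define w where "w = exp (2 * complex_of_real pi * \<i> * complex_of_real (real U / real p))"
  have q: "p ^ m > 0" using p2 by simp
  have tm: "exp (2 * complex_of_real pi * \<i> * complex_of_real (frac_kx p m u (X(k:=t))))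
           * complex_of_real (real p powr (- real_of_int (dC p l a (X(k:=t))))) = c * W * w ^ t" for t
  proof -
    have d: "dC p l a (X(k:=t)) = dC p l a X" unfolding dC_def using anc_depth_upd[OF lk] by simp
    have f: "frac_kx p m u (X(k:=t)) = real ((U * (A + t * p ^ k)) mod p ^ m) / real (p ^ m)"
      unfolding frac_kx_def U_def A_def m zp_trunc_upd_Suc by simp
    have r: "2 * complex_of_real pi * \<i> * complex_of_real (real (U * (A + t * p ^ k)) / real (p ^ m))
       = 2 * complex_of_real pi * \<i> * complex_of_real (real (U * A) / real (p ^ m))
         + of_nat t * (2 * complex_of_real pi * \<i> * complex_of_real (real U / real p))"
      using p2 unfolding m by (simp add: field_simps)
    show ?thesis unfolding d f exp_mod[OF q] r exp_add exp_of_nat_mult c_def w_def W_def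
      by (simp add: mult_ac)
  qed
  have "(\<Sum>t\<in>{0..<p}. c * W * w ^ t) = c * W * (\<Sum>t<p. w ^ t)"
    by (simp add: sum_distrib_left lessThan_atLeast0)
  also have "(\<Sum>t<p. w ^ t) = 0" unfolding w_def using root_sum[OF p2] U U_def by simp
  finally show ?thesis unfolding tm by simp
qed

theorem mainTheorem1:
  fixes p m l a :: nat and u :: "nat \<Rightarrow> nat"
  assumes "prime p"
    and "is_padic_digits p u" and "u 0 \<noteq> 0"
    and "m \<ge> 1"
    and "a < p ^ l"
    and "int l < - (- int m) - 2"
  shows "phi p m u l a = 0"
proof -
  have p2: "p \<ge> 2" using assms(1) prime_ge_2_nat by blast
  have Umod: "zp_trunc p u m mod p \<noteq> 0"
    using zp_trunc_mod[OF assms(4), of u p] assms(2,3) unfolding is_padic_digits_def by simp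
  define k where "k = m - 1"
  have m: "m = Suc k" using assms(4) unfolding k_def by simp
  have lk: "l \<le> k" using assms(6) unfolding k_def by simp
  define M where "M = measure_pmf (pmf_of_set {0..<p})"
  define F where "F = (\<lambda>x. exp (2 * complex_of_real pi * \<i> * complex_of_real (frac_kx p m u x))
           * complex_of_real (real p powr (- real_of_int (dC p l a x))))"
  define I where "I = UNIV - {k}"
  define N where "N = PiM I (\<lambda>_. M)"
  have H: "haar_Zp p = PiM UNIV (\<lambda>_. M)" by (simp add: haar_Zp_def M_def)
  have inner: "(\<integral>x. F (X(k:=x)) \<partial>M) = 0" for X
  proof -
    have ne: "{0..<p} \<noteq> {}" using p2 by auto
    have "(\<integral>x. F (X(k:=x)) \<partial>M) = (\<Sum>t\<in>{0..<p}. pmf (pmf_of_set {0..<p}) t *\<^sub>R F (X(k:=t)))"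
      unfolding M_def by (rule integral_measure_pmf) (use ne in auto)
    also have "\<dots> = (1 / real p) *\<^sub>R (\<Sum>t\<in>{0..<p}. F (X(k:=t)))"
      using ne by (simp add: scaleR_sum_right)
    also have "(\<Sum>t\<in>{0..<p}. F (X(k:=t))) = 0"
      unfolding F_def by (rule key_sum[OF p2 Umod lk m])
    finally show ?thesis by (metis scaleR_zero_right)
  qed
  interpret PM: prob_space M unfolding M_def by (rule prob_space_measure_pmf)
  interpret PN: prob_space N unfolding N_def by (intro prob_space_PiM) (rule PM.prob_space_axioms)
  interpret PP: pair_sigma_finite M N ..
  have "integral\<^sup>L (haar_Zp p) F = 0"
  proof (cases "integrable (haar_Zp p) F")
    case False then show ?thesis by (simp add: not_integrable_integral_eq)
  next
    case True
    hence Fm: "F \<in> borel_measurable (PiM UNIV (\<lambda>_. M))" using H borel_measurable_integrable by metis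
    have ins: "insert k I = UNIV" unfolding I_def by auto
    have D: "distr (M \<Otimes>\<^sub>M N) (PiM UNIV (\<lambda>_. M)) (\<lambda>(x,X). X(k:=x)) = PiM UNIV (\<lambda>_. M)"
      using distr_pair_PiM_eq_PiM[of I "\<lambda>_. M" k] PM.prob_space_axioms unfolding ins N_def by simp
    have Tm': "(\<lambda>z. (snd z)(k := fst z)) \<in> measurable (M \<Otimes>\<^sub>M N) (PiM UNIV (\<lambda>_. M))"
      by (rule measurable_fun_upd[where J=I]) (auto simp: I_def N_def)
    have Teq: "(\<lambda>(x,X). X(k:=x)) = (\<lambda>z. (snd z)(k := fst z))" by (auto simp: split_beta')
    have Tm: "(\<lambda>(x,X). X(k:=x)) \<in> measurable (M \<Otimes>\<^sub>M N) (PiM UNIV (\<lambda>_. M))"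
      using Tm' Teq by simp
    have int2: "integrable (M \<Otimes>\<^sub>M N) (\<lambda>z. F ((\<lambda>(x,X). X(k:=x)) z))"
      using True H D integrable_distr_eq[OF Tm Fm] by simp
    have "integral\<^sup>L (haar_Zp p) F = integral\<^sup>L (M \<Otimes>\<^sub>M N) (\<lambda>z. F ((\<lambda>(x,X). X(k:=x)) z))"
      using H D integral_distr[OF Tm Fm] by simp
    also have "\<dots> = integral\<^sup>L (M \<Otimes>\<^sub>M N) (case_prod (\<lambda>x X. F (X(k:=x))))"
      by (simp add: split_beta')
    also have "\<dots> = (\<integral>X. (\<integral>x. F (X(k:=x)) \<partial>M) \<partial>N)"
      by (rule PP.integral_snd[symmetric]) (use int2 in \<open>simp add: split_beta'\<close>)
    also have "\<dots> = 0" by (simp add: inner)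
    finally show ?thesis .
  qed
  then show ?thesis unfolding phi_def F_def by simp
qed

end
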